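(* Let $N\ge 2$ and $1\le\tilde N\le N-1$ be integers. Let $\beta>0$ satisfy $(\beta+1)^{N-\tilde N-1}>\beta^{N-\tilde N+1}$, and suppose that, for all $x\in\mathcal{X}$, $$V_{\tilde N+1}^{\tilde N}(x)\le (\beta+1)\,V_{\tilde N}^{\tilde N}(x)\qquad\text{and}\qquad V_n^{\tilde N}(x)\le (\beta+1)\,l(x,\mu_n(x))\ \text{ for all } n\in\{\tilde N+1,\dots,N\}.$$ Set $$\alpha=1-\frac{\beta^{N-\tilde N+1}}{(\beta+1)^{N-\tilde N-1}}\in(0,1].$$ Then for every $x\in\mathcal{X}$, $$\alpha\, J_\infty^{N,\tilde N}(x)\le V_N^{\tilde N}(x).$$
   Context: Let $\mathcal{D}\subset\mathbb{R}^n$ and $\mathcal{U}\subset\mathbb{R}^m$ be compact, and let $f:\mathcal{D}\times\mathcal{U}\to\mathcal{D}$ define the discrete-time system $x(k+1)=f(x(k),u(k))$, with $f(0,0)=0$. The stage cost $l:\mathcal{D}\times\mathcal{U}\to[0,\infty)$ is positive definite with $l(0,0)=0$. The set $\mathcal{X}\subseteq\mathcal{D}$ is control invariant: for every $x\in\mathcal{X}$ there is $u\in\mathcal{U}$ with $f(x,u)\in\mathcal{X}$. For $x\in\mathcal{X}$ write $\mathcal{U}(x)=\{u\in\mathcal{U}: f(x,u)\in\mathcal{X}\}$. Fix integers $N$ and $\tilde N$ with $0\le\tilde N\le N-1$. Define value functions on $\mathcal{X}$ recursively (dynamic programming form of the MPC problem with prediction horizon $N$ in which the state constraint $x\in\mathcal{X}$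 is imposed only during the first $N-\tilde N$ steps, the last $\tilde N$ steps being unconstrained): - $V_0^{\tilde N}\equiv 0$. - For $n\in\{1,\dots,\tilde N\}$: $V_n^{\tilde N}(x)=\min_{u\in\mathcal{U}}\big[V_{n-1}^{\tilde N}(f(x,u))+l(x,u)\big]$, with $\mu_n(x)$ a minimizer. - For $n\in\{\tilde N+1,\dots,N\}$: $V_n^{\tilde N}(x)=\min_{u\in\mathcal{U}(x)}\big[V_{n-1}^{\tilde N}(f(x,u))+l(x,u)\big]$, with $\mu_n(x)$ a minimizer; in particular $f(x,\mu_n(x))\in\mathcal{X}$. All minima are assumed to be attained. The MPC closed loop applies the feedback $\mu_N$: given $x\in\mathcal{X}$, set $x(0)=x$ and $x(k+1)=f(x(k),\mu_N(x(k)))$. This trajectory remains in $\mathcal{X}$. The closed-loop infinite-horizon cost is $$J_\infty^{N,\tilde N}(x)=\sum_{k=0}^{\infty} l\big(x(k),\mu_N(x(k))\big).$$ *)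

theory Defs
  imports "HOL-Analysis.Analysis"
begin

definition Uadm :: "('x \<Rightarrow> 'u \<Rightarrow> 'x) \<Rightarrow> 'u set \<Rightarrow> 'x set \<Rightarrow> 'x \<Rightarrow> 'u set" where
  "Uadm f U X x = {u \<in> U. f x u \<in> X}"

fun Vfun :: "('x \<Rightarrow> 'u \<Rightarrow> 'x) \<Rightarrow> ('x \<Rightarrow> 'u \<Rightarrow> real) \<Rightarrow> 'u set \<Rightarrow> 'x set
              \<Rightarrow> nat \<Rightarrow> nat \<Rightarrow> 'x \<Rightarrow> real" where
  "Vfun f l U X Nt 0 x = 0"
| "Vfun f l U X Nt (Suc n) x =
     (if Suc n \<le> Nt then (INF u\<in>U. Vfun f l U X Nt n (f x u) + l x u)
      else (INF u\<in>Uadm f U X x. Vfun f l U X Nt n (f x u) + l x u))"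

definition cl_traj :: "('x \<Rightarrow> 'u \<Rightarrow> 'x) \<Rightarrow> ('x \<Rightarrow> 'u) \<Rightarrow> 'x \<Rightarrow> nat \<Rightarrow> 'x" where
  "cl_traj f mu x k = ((\<lambda>y. f y (mu y)) ^^ k) x"

end

theory Submission
  imports Defs
begin

lemma INF_min_real:
  fixes g :: "'a \<Rightarrow> real"
  assumes "a \<in> S" "\<forall>s\<in>S. g a \<le> g s"
  shows "(INF s\<in>S. g s) = g a"
proof (rule antisym)
  have "bdd_below (g ` S)" using assms by (auto intro!: bdd_belowI[of _ "g a"])
  then show "(INF s\<in>S. g s) \<le> g a" using assms(1) by (rule cINF_lower)
  show "g a \<le> (INF s\<in>S. g s)" using assms by (intro cINF_greatest) auto
qed

theorem theorem1:
  fixes D :: "(real ^ 'n) set" and U :: "(real ^ 'm) set" and X :: "(real ^ 'n) set"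
    and f :: "real ^ 'n \<Rightarrow> real ^ 'm \<Rightarrow> real ^ 'n"
    and l :: "real ^ 'n \<Rightarrow> real ^ 'm \<Rightarrow> real"
    and mu :: "nat \<Rightarrow> real ^ 'n \<Rightarrow> real ^ 'm"
    and N Nt :: nat and \<beta> :: real
  assumes D_compact: "compact D" and U_compact: "compact U"
    and zero_D: "0 \<in> D" and zero_U: "0 \<in> U"
    and f_maps: "\<forall>x\<in>D. \<forall>u\<in>U. f x u \<in> D"
    and f_zero: "f 0 0 = 0"
    and l_nonneg: "\<forall>x\<in>D. \<forall>u\<in>U. 0 \<le> l x u"
    and l_pos: "\<forall>x\<in>D. \<forall>u\<in>U. (x, u) \<noteq> (0, 0) \<longrightarrow> 0 < l x u"
    and l_zero: "l 0 0 = 0"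
    and X_sub: "X \<subseteq> D"
    and X_inv: "\<forall>x\<in>X. \<exists>u\<in>U. f x u \<in> X"
    and mu_unc: "\<forall>n\<in>{1..Nt}. \<forall>x\<in>D. mu n x \<in> U \<and>
        (\<forall>u\<in>U. Vfun f l U X Nt (n - 1) (f x (mu n x)) + l x (mu n x)
                  \<le> Vfun f l U X Nt (n - 1) (f x u) + l x u)"
    and mu_con: "\<forall>n\<in>{Nt+1..N}. \<forall>x\<in>X. mu n x \<in> Uadm f U X x \<and>
        (\<forall>u\<in>Uadm f U X x. Vfun f l U X Nt (n - 1) (f x (mu n x)) + l x (mu n x)
                  \<le> Vfun f l U X Nt (n - 1) (f x u) + l x u)"
    and N_ge: "2 \<le> N" and Nt_ge: "1 \<le> Nt" and Nt_le: "Nt \<le> N - 1"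
    and beta_pos: "0 < \<beta>"
    and beta_cond: "(\<beta> + 1) ^ (N - Nt - 1) > \<beta> ^ (N - Nt + 1)"
    and hyp1: "\<forall>x\<in>X. Vfun f l U X Nt (Nt + 1) x \<le> (\<beta> + 1) * Vfun f l U X Nt Nt x"
    and hyp2: "\<forall>x\<in>X. \<forall>n\<in>{Nt+1..N}. Vfun f l U X Nt n x \<le> (\<beta> + 1) * l x (mu n x)"
  shows "\<forall>x\<in>X.
     summable (\<lambda>k. l (cl_traj f (mu N) x k) (mu N (cl_traj f (mu N) x k))) \<and>
     (1 - \<beta> ^ (N - Nt + 1) / (\<beta> + 1) ^ (N - Nt - 1)) *
       (\<Sum>k. l (cl_traj f (mu N) x k) (mu N (cl_traj f (mu N) x k)))
     \<le> Vfun f l U X Nt N x"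
proof -
  define V where "V = Vfun f l U X Nt"
  define M where "M = N - Nt"
  have M1: "1 \<le> M" using Nt_le N_ge unfolding M_def by simp
  have Vs: "V (Suc n) y = (if Suc n \<le> Nt then (INF u\<in>U. V n (f y u) + l y u)
      else (INF u\<in>Uadm f U X y. V n (f y u) + l y u))" for n y
    unfolding V_def by simp
  have L1: "V n y = V (n-1) (f y (mu n y)) + l y (mu n y) \<and> mu n y \<in> U"
    if "n \<in> {1..Nt}" "y \<in> D" for n y
  proof -
    have "n \<noteq> 0" using that by auto
    then obtain m where m: "n = Suc m" using not0_implies_Suc by blast
    have mn: "mu n y \<in> U" and mm: "\<forall>u\<in>U. V m (f y (mu n y)) + l y (mu n y) \<le> V m (f y u) + l y u"
      using bspec[OF bspec[OF mu_unc that(1)] that(2)] unfolding V_def m by auto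
    have "(INF u\<in>U. V m (f y u) + l y u) = V m (f y (mu n y)) + l y (mu n y)"
      using mn mm by (intro INF_min_real) auto
    then have "V n y = V m (f y (mu n y)) + l y (mu n y)"
    proof -
      have "Suc m \<le> Nt" using that m by auto
      then show ?thesis using \<open>(INF u\<in>U. V m (f y u) + l y u) = _\<close> unfolding m by (simp only: Vs if_True)
    qed
    then show ?thesis using m mn by simp
  qed
  have L2: "V n y = V (n-1) (f y (mu n y)) + l y (mu n y) \<and> mu n y \<in> U \<and> f y (mu n y) \<in> X
      \<and> (\<forall>u\<in>U. f y u \<in> X \<longrightarrow> V n y \<le> V (n-1) (f y u) + l y u)"
    if "n \<in> {Nt+1..N}" "y \<in> X" for n y
  proof -
    have "n \<noteq> 0" using that by auto
    then obtain m where m: "n = Suc m" using not0_implies_Suc by blast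
    have mn: "mu n y \<in> Uadm f U X y" and mm: "\<forall>u\<in>Uadm f U X y. V m (f y (mu n y)) + l y (mu n y) \<le> V m (f y u) + l y u"
      using bspec[OF bspec[OF mu_con that(1)] that(2)] unfolding V_def m by auto
    have nle: "\<not> Suc m \<le> Nt" using that m by auto
    have "(INF u\<in>Uadm f U X y. V m (f y u) + l y u) = V m (f y (mu n y)) + l y (mu n y)"
      using mn mm by (intro INF_min_real) auto
    then have eq: "V n y = V m (f y (mu n y)) + l y (mu n y)"
      using nle unfolding m by (simp only: Vs if_False)
    show ?thesis using eq m mn mm unfolding Uadm_def by auto
  qed
  have N0: "\<forall>y\<in>D. 0 \<le> V n y" if "n \<le> Nt" for n
    using that
  proof (induction n)
    case 0 then show ?case unfolding V_def by simp
  next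
    case (Suc n)
    show ?case
    proof
      fix y assume y: "y \<in> D"
      have h: "V (Suc n) y = V n (f y (mu (Suc n) y)) + l y (mu (Suc n) y) \<and> mu (Suc n) y \<in> U"
        using L1[of "Suc n" y] Suc.prems y by simp
      then show "0 \<le> V (Suc n) y" using Suc y f_maps l_nonneg by fastforce
    qed
  qed
  have N1: "\<forall>y\<in>X. 0 \<le> V n y" if "n \<le> N" for n
    using that
  proof (induction n)
    case 0 then show ?case unfolding V_def by simp
  next
    case (Suc n)
    show ?case
    proof (cases "Suc n \<le> Nt")
      case True then show ?thesis using N0 X_sub by blast
    next
      case False
      show ?thesis
      proof
        fix y assume y: "y \<in> X"
        have h: "V (Suc n) y = V n (f y (mu (Suc n) y)) + l y (mu (Suc n) y) \<and> mu (Suc n) y \<in> U \<and> f y (mu (Suc n) y) \<in> X"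
          using L2[of "Suc n" y] Suc.prems False y by simp
        then show "0 \<le> V (Suc n) y" using Suc y X_sub l_nonneg by fastforce
      qed
    qed
  qed
  define \<alpha> where "\<alpha> = 1 - \<beta> ^ (N - Nt + 1) / (\<beta> + 1) ^ (N - Nt - 1)"
  have alpha_pos: "0 < \<alpha>"
    using beta_cond beta_pos unfolding \<alpha>_def by (simp add: field_simps)
  have step: "V N (f x (mu N x)) \<le> V N x - \<alpha> * l x (mu N x)" if x: "x \<in> X" for x
  proof -
    define xs where "xs = rec_nat x (\<lambda>k z. f z (mu (N-k) z))"
    have xs0: "xs 0 = x" and xsS: "xs (Suc k) = f (xs k) (mu (N-k) (xs k))" for k
      unfolding xs_def by simp_all
    define \<sigma> where "\<sigma> k = V (N-k) (xs k)" for k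
    define lk where "lk k = l (xs k) (mu (N-k) (xs k))" for k
    have T1: "xs k \<in> X" if "k \<le> M" for k
      using that
    proof (induction k)
      case 0 then show ?case using xs0 x by simp
    next
      case (Suc k)
      then show ?case using L2[of "N-k" "xs k"] unfolding xsS M_def by auto
    qed
    have T2: "\<sigma> k = \<sigma> (Suc k) + lk k" if "k < M" for k
    proof -
      have nk: "N-k \<in> {Nt+1..N}" using that unfolding M_def by auto
      have e: "V (N-k) (xs k) = V (N-k-1) (f (xs k) (mu (N-k) (xs k))) + l (xs k) (mu (N-k) (xs k))"
        using L2[OF nk T1[of k]] that by linarith
      have e2: "N-k-1 = N - Suc k" by simp
      show ?thesis unfolding \<sigma>_def lk_def xsS using e e2 by simp
    qed
    have T3: "\<sigma> k \<le> (\<beta>+1) * lk k" if "k < M" for k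
    proof -
      have nk: "N-k \<in> {Nt+1..N}" using that unfolding M_def by auto
      have xk: "xs k \<in> X" using T1[of k] that by simp
      from bspec[OF bspec[OF hyp2 xk] nk] show ?thesis unfolding \<sigma>_def lk_def V_def .
    qed
    have T3': "(\<beta>+1) * \<sigma> (Suc k) \<le> \<beta> * \<sigma> k" if "k < M" for k
      using T2[OF that] T3[OF that] by (simp add: algebra_simps)
    have T4: "(\<beta>+1)^j * \<sigma> (Suc j) \<le> \<beta>^j * \<sigma> 1" if "Suc j \<le> M" for j
      using that
    proof (induction j)
      case 0 then show ?case by simp
    next
      case (Suc j)
      have "(\<beta>+1)^(Suc j) * \<sigma> (Suc (Suc j)) = (\<beta>+1)^j * ((\<beta>+1) * \<sigma> (Suc (Suc j)))" by simp
      also have "\<dots> \<le> (\<beta>+1)^j * (\<beta> * \<sigma> (Suc j))"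
        using T3'[of "Suc j"] Suc.prems beta_pos by (intro mult_left_mono) auto
      also have "\<dots> = \<beta> * ((\<beta>+1)^j * \<sigma> (Suc j))" by simp
      also have "\<dots> \<le> \<beta> * (\<beta>^j * \<sigma> 1)"
        using Suc beta_pos by (intro mult_left_mono) auto
      finally show ?case by simp
    qed
    have T5: "V N (xs 1) \<le> \<sigma> 1 - \<sigma> (Suc j) + V (N-j) (xs (Suc j))" if "Suc j \<le> M" for j
      using that
    proof (induction j)
      case 0 then show ?case by simp
    next
      case (Suc j)
      have jM: "Suc j < M" using Suc.prems by simp
      have a: "V (N-j) (xs (Suc j)) \<le> V (N-j-1) (xs (Suc (Suc j))) + lk (Suc j)"
      proof -
        have u: "mu (N - Suc j) (xs (Suc j)) \<in> U"
          using L2[of "N - Suc j" "xs (Suc j)"] T1[of "Suc j"] jM unfolding M_def by auto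
        have fx: "xs (Suc (Suc j)) \<in> X" using T1 Suc.prems by simp
        have nj: "N-j \<in> {Nt+1..N}" using jM unfolding M_def by auto
        have xj: "xs (Suc j) \<in> X" using T1 jM by simp
        have "\<forall>u\<in>U. f (xs (Suc j)) u \<in> X \<longrightarrow> V (N-j) (xs (Suc j)) \<le> V (N-j-1) (f (xs (Suc j)) u) + l (xs (Suc j)) u"
          using L2[OF nj xj] by blast
        then show ?thesis using u fx unfolding lk_def xsS[of "Suc j"] by blast
      qed
      have b: "lk (Suc j) = \<sigma> (Suc j) - \<sigma> (Suc (Suc j))" using T2[OF jM] by simp
      have c: "N - j - 1 = N - Suc j" by simp
      show ?case using Suc.IH Suc.prems a b c by simp
    qed
    have Mm: "Suc (M-1) = M" using M1 by simp
    have T5': "V N (xs 1) \<le> \<sigma> 1 - \<sigma> M + V (Nt+1) (xs M)"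
      using T5[of "M-1"] Mm M1 unfolding M_def by simp
    have h1: "V (Nt+1) (xs M) \<le> (\<beta>+1) * \<sigma> M"
      using hyp1 T1[of M] unfolding \<sigma>_def V_def M_def using Nt_le by simp
    have sM0: "0 \<le> \<sigma> M" using N1[of Nt] T1[of M] Nt_le unfolding \<sigma>_def M_def by simp
    have T6: "\<sigma> 1 \<le> \<beta> * lk 0" using T2[of 0] T3[of 0] M1 by (simp add: algebra_simps)
    have T4': "(\<beta>+1)^(M-1) * \<sigma> M \<le> \<beta>^(M-1) * \<sigma> 1" using T4[of "M-1"] Mm by simp
    have s0: "\<sigma> 0 = \<sigma> 1 + lk 0" using T2[of 0] M1 by simp
    define c where "c = (\<beta>+1)^(M-1)"
    define b where "b = \<beta>^(M-1)"
    have cpos: "0 < c" unfolding c_def using beta_pos by simp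
    have bnn: "0 \<le> b" unfolding b_def using beta_pos by simp
    have key1: "\<sigma> M * c \<le> b * \<beta> * lk 0"
    proof -
      have "\<sigma> M * c \<le> b * \<sigma> 1" using T4' unfolding b_def c_def by (simp add: mult.commute)
      also have "\<dots> \<le> b * (\<beta> * lk 0)" using T6 bnn by (rule mult_left_mono)
      finally show ?thesis by simp
    qed
    have key2: "\<beta> * \<sigma> M \<le> \<beta> * \<beta> * b * lk 0 / c"
    proof -
      have "\<beta> * (\<sigma> M * c) \<le> \<beta> * (b * \<beta> * lk 0)" using key1 beta_pos by (intro mult_left_mono) auto
      then show ?thesis using cpos by (simp add: field_simps)
    qed
    have pw: "\<beta> ^ (N - Nt + 1) = \<beta> * \<beta> * b" unfolding b_def M_def using M1 Mm
      by (metis M_def power_Suc add.commute plus_1_eq_Suc mult.assoc)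
    have al: "\<alpha> = 1 - \<beta> * \<beta> * b / c" unfolding \<alpha>_def pw c_def M_def by simp
    have "V N (xs 1) \<le> \<sigma> 1 + \<beta> * \<sigma> M" using T5' h1 by (simp add: algebra_simps)
    also have "\<dots> \<le> \<sigma> 0 - \<alpha> * lk 0"
    proof -
      have "\<alpha> * lk 0 = lk 0 - \<beta> * \<beta> * b * lk 0 / c" unfolding al using cpos by (simp add: field_simps)
      then show ?thesis using key2 s0 by simp
    qed
    finally show ?thesis unfolding \<sigma>_def lk_def using xs0 xsS[of 0] by simp
  qed
  show ?thesis
  proof
    fix x assume x: "x \<in> X"
    define y where "y k = cl_traj f (mu N) x k" for k
    have yS: "y (Suc k) = f (y k) (mu N (y k))" for k unfolding y_def cl_traj_def by simp
    have y0: "y 0 = x" unfolding y_def cl_traj_def by simp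
    have NN: "N \<in> {Nt+1..N}" using Nt_le N_ge by auto
    have yX: "y k \<in> X" for k
      by (induction k) (use y0 x yS L2[OF NN] in auto)
    have lnn: "0 \<le> l (y k) (mu N (y k))" for k
      using yX[of k] L2[OF NN, of "y k"] l_nonneg X_sub by blast
    have acc: "V N (y K) + \<alpha> * (\<Sum>k<K. l (y k) (mu N (y k))) \<le> V N x" for K
    proof (induction K)
      case 0 then show ?case using y0 by simp
    next
      case (Suc K)
      have "V N (y (Suc K)) \<le> V N (y K) - \<alpha> * l (y K) (mu N (y K))"
        using step[OF yX[of K]] yS by simp
      then show ?case using Suc by (simp add: algebra_simps)
    qed
    have bnd: "(\<Sum>k<K. \<alpha> * l (y k) (mu N (y k))) \<le> V N x" for K
    proof -
      have "0 \<le> V N (y K)" using N1[of N] yX[of K] by simp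
      then show ?thesis using acc[of K] by (simp add: sum_distrib_left)
    qed
    have bnd2: "(\<Sum>k<K. l (y k) (mu N (y k))) \<le> V N x / \<alpha>" for K
      using bnd[of K] alpha_pos by (simp add: sum_distrib_left[symmetric] field_simps)
    have sm: "summable (\<lambda>k. l (y k) (mu N (y k)))"
      by (rule summableI_nonneg_bounded[OF lnn bnd2])
    have "\<alpha> * (\<Sum>k. l (y k) (mu N (y k))) = (\<Sum>k. \<alpha> * l (y k) (mu N (y k)))"
      using suminf_mult[OF sm] by simp
    also have "\<dots> \<le> V N x"
      by (rule suminf_le_const[OF summable_mult[OF sm] bnd])
    finally show "summable (\<lambda>k. l (cl_traj f (mu N) x k) (mu N (cl_traj f (mu N) x k))) \<and>
     (1 - \<beta> ^ (N - Nt + 1) / (\<beta> + 1) ^ (N - Nt - 1)) *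
       (\<Sum>k. l (cl_traj f (mu N) x k) (mu N (cl_traj f (mu N) x k)))
     \<le> Vfun f l U X Nt N x"
      using sm unfolding y_def \<alpha>_def V_def by simp
  qed
qed

end
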